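(* Let $n\ge2$, $L\ge0$, $k\in\{0,\dots,n-1\}$, and let $p=(\lambda_0,\dots,\lambda_L)$ be a path with $\lambda_0=2\Lambda_0$ and $\lambda_L=\Lambda_k+\Lambda_{L-k}$. Let $x_1<\dots<x_N$ be the positions and $h_1,\dots,h_N$ the heights of the domain walls of $p$, and put $W=x_N$ (the number of nodes in the first row of the associated K-graph) and $h_N$ the height of the last domain wall, with the convention $W=0$, $h_N=h_0=n$ if $N=0$. Then $W-h_N\equiv 2k \pmod n$.
   Context: $\Lambda_0,\dots,\Lambda_{n-1}$ are the fundamental weights of the affine algebra $\widehat{sl(n)}$; indices are extended to all integers modulo $n$ ($\Lambda_i=\Lambda_{i'}$ when $i\equiv i'\pmod n$). For $i\in\mathbb{Z}$ set $\hat{i}=\Lambda_{i+1}-\Lambda_i$ (depending only on $i \bmod n$; the weights $\hat0,\dots,\widehat{n-1}$ are distinct). $P_2^+=\{\Lambda_a+\Lambda_b: 0\le a\le b\le n-1\}$. A path is a sequence $(\lambda_0,\dots,\lambda_L)$ of elements of $P_2^+$ with $\lambda_{\ell+1}-\lambda_\ell\in\{\hat0,\dots,\widehat{n-1}\}$. For a path with $\lambda_0=2\Lambda_0$, $\lambda_L=\Lambda_k+\Lambda_{L-k}$, set $\lambda_{L+1}=\Lambda_k+\Lambda_{L-k+1}$ and define $\mu_\ell\in\{0,\dots,n-1\}$ ($0\le\ell\le L$) by $\widehat{\mu_\ell}=\lambda_{\ell+1}-\lambda_\ell$. There is a domain wall at position $\ell\in\{1,\dots,L\}$ of height $h\in\{1,\dots,n-1\}$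 if $\mu_\ell-\mu_{\ell-1}\equiv h+1\pmod n$. *)

theory Defs
  imports "HOL-Number_Theory.Cong" "HOL-Library.Function_Algebras"
begin

text \<open>Weights of level-type combinations of the fundamental weights
  \<Lambda>_0,...,\<Lambda>_{n-1} are represented by their coefficient vectors
  (coefficient of \<Lambda>_j at position j, for j < n).\<close>
type_synonym weight = "nat \<Rightarrow> int"

definition Lam :: "nat \<Rightarrow> int \<Rightarrow> weight" where
  "Lam n i = (\<lambda>j. if int j = i mod int n then 1 else 0)"

definition hat :: "nat \<Rightarrow> int \<Rightarrow> weight" where
  "hat n i = Lam n (i + 1) - Lam n i"

definition P2plus :: "nat \<Rightarrow> weight set" where
  "P2plus n = {Lam n (int a) + Lam n (int b) | a b. a \<le> b \<and> b \<le> n - 1}"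

definition is_path :: "nat \<Rightarrow> nat \<Rightarrow> (nat \<Rightarrow> weight) \<Rightarrow> bool" where
  "is_path n L lam \<longleftrightarrow>
     (\<forall>l\<le>L. lam l \<in> P2plus n) \<and>
     (\<forall>l<L. \<exists>i<n. lam (Suc l) - lam l = hat n (int i))"

definition lamext :: "nat \<Rightarrow> nat \<Rightarrow> nat \<Rightarrow> (nat \<Rightarrow> weight) \<Rightarrow> nat \<Rightarrow> weight" where
  "lamext n L k lam l =
     (if l \<le> L then lam l else Lam n (int k) + Lam n (int L - int k + 1))"

definition mu :: "nat \<Rightarrow> nat \<Rightarrow> nat \<Rightarrow> (nat \<Rightarrow> weight) \<Rightarrow> nat \<Rightarrow> nat" where
  "mu n L k lam l =
     (THE m. m < n \<and> hat n (int m) = lamext n L k lam (Suc l) - lamext n L k lam l)"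

definition domain_wall :: "nat \<Rightarrow> nat \<Rightarrow> nat \<Rightarrow> (nat \<Rightarrow> weight) \<Rightarrow> nat \<Rightarrow> nat \<Rightarrow> bool" where
  "domain_wall n L k lam l h \<longleftrightarrow>
     1 \<le> l \<and> l \<le> L \<and> 1 \<le> h \<and> h \<le> n - 1 \<and>
     [int (mu n L k lam l) - int (mu n L k lam (l - 1)) = int h + 1] (mod int n)"

definition wall_positions :: "nat \<Rightarrow> nat \<Rightarrow> nat \<Rightarrow> (nat \<Rightarrow> weight) \<Rightarrow> nat set" where
  "wall_positions n L k lam = {l. \<exists>h. domain_wall n L k lam l h}"

definition W :: "nat \<Rightarrow> nat \<Rightarrow> nat \<Rightarrow> (nat \<Rightarrow> weight) \<Rightarrow> nat" where
  "W n L k lam = (if wall_positions n L k lam = {} then 0 else Max (wall_positions n L k lam))"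

definition hN :: "nat \<Rightarrow> nat \<Rightarrow> nat \<Rightarrow> (nat \<Rightarrow> weight) \<Rightarrow> nat" where
  "hN n L k lam = (if wall_positions n L k lam = {} then n
     else (THE h. domain_wall n L k lam (W n L k lam) h))"

end

theory Submission
  imports Defs
begin

lemma Lam_app: "Lam n i j = (if int j = i mod int n then 1 else 0)"
  by (simp add: Lam_def)

lemma Lam_cong: "i mod int n = j mod int n \<Longrightarrow> Lam n i = Lam n j"
  by (simp add: Lam_def)

lemma hat_cong: "int n dvd i - j \<Longrightarrow> hat n i = hat n j"
proof -
  assume a: "int n dvd i - j"
  have "i mod int n = j mod int n" using a by (simp add: mod_eq_dvd_iff)
  moreover have "(i + 1) mod int n = (j + 1) mod int n" using a by (simp add: mod_eq_dvd_iff)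
  ultimately show ?thesis by (simp add: hat_def Lam_def)
qed

lemma mod_succ_ne: "n \<ge> 2 \<Longrightarrow> (i + 1) mod int n \<noteq> i mod int n"
proof
  assume n: "n \<ge> 2" and e: "(i + 1) mod int n = i mod int n"
  then have "int n dvd 1" by (simp add: mod_eq_dvd_iff)
  then have "int n \<le> 1" by (simp add: zdvd_imp_le)
  with n show False by simp
qed

lemma hat_inj: assumes n: "n \<ge> 2" and e: "hat n i = hat n j" shows "int n dvd i - j"
proof -
  define a where "a = nat (i mod int n)"
  have ia: "int a = i mod int n" using n by (simp add: a_def)
  have "hat n i a = -1" using mod_succ_ne[OF n, of i] ia
    by (simp add: hat_def Lam_def)
  then have "hat n j a = -1" using e by simp
  then have "int a = j mod int n"
    by (simp add: hat_def Lam_def split: if_splits)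
  with ia show ?thesis by (metis mod_eq_dvd_iff)
qed

lemma P2_nonneg: "x \<in> P2plus n \<Longrightarrow> x j \<ge> 0"
  by (auto simp: P2plus_def Lam_def)

lemma grp1: "(a::'a::ab_group_add) + b - (b - c) = a + c"
  by (simp add: algebra_simps)

lemma mu_spec:
  assumes n: "n \<ge> 2" and p: "is_path n L lam"
    and lL: "lam L = Lam n (int k) + Lam n (int L - int k)" and l: "l \<le> L"
  shows "mu n L k lam l < n \<and> hat n (int (mu n L k lam l)) = lamext n L k lam (Suc l) - lamext n L k lam l"
proof -
  have "\<exists>i<n. hat n (int i) = lamext n L k lam (Suc l) - lamext n L k lam l"
  proof (cases "l < L")
    case True
    then obtain i where "i < n" "lam (Suc l) - lam l = hat n (int i)" using p by (auto simp: is_path_def)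
    then show ?thesis using True by (auto simp: lamext_def)
  next
    case False
    then have lL': "l = L" using l by simp
    define i where "i = nat ((int L - int k) mod int n)"
    have i1: "i < n" using n by (simp add: i_def nat_less_iff)
    have "int n dvd int i - (int L - int k)" using n
      by (simp add: i_def mod_eq_dvd_iff[symmetric])
    then have "hat n (int i) = hat n (int L - int k)" by (rule hat_cong)
    also have "\<dots> = lamext n L k lam (Suc l) - lamext n L k lam l"
      using lL lL' by (simp add: lamext_def hat_def algebra_simps)
    finally show ?thesis using i1 by blast
  qed
  then obtain i where i: "i < n" "hat n (int i) = lamext n L k lam (Suc l) - lamext n L k lam l" by blast
  have u: "m = i" if "m < n" "hat n (int m) = lamext n L k lam (Suc l) - lamext n L k lam l" for m
  proof -
    have "int n dvd int m - int i" using hat_inj[OF n] that i by simp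
    then have "int m mod int n = int i mod int n" by (simp add: mod_eq_dvd_iff)
    then show ?thesis using that(1) i(1) by simp
  qed
  have "mu n L k lam l = i" unfolding mu_def
  proof (rule the_equality)
    show "i < n \<and> hat n (int i) = lamext n L k lam (Suc l) - lamext n L k lam l" using i by blast
  next
    fix x assume "x < n \<and> hat n (int x) = lamext n L k lam (Suc l) - lamext n L k lam l"
    then show "x = i" using u by blast
  qed
  then show ?thesis using i by simp
qed

theorem lemma3:
  fixes n L k :: nat and lam :: "nat \<Rightarrow> weight"
  assumes "n \<ge> 2" and "k < n"
    and "is_path n L lam"
    and "lam 0 = Lam n 0 + Lam n 0"
    and "lam L = Lam n (int k) + Lam n (int L - int k)"
  shows "[int (W n L k lam) - int (hN n L k lam) = 2 * int k] (mod int n)"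
proof -
  note n = assms(1) and p = assms(3) and lL = assms(5)
  define N where "N = int n"
  define m where "m = (\<lambda>l. int (mu n L k lam l))"
  define le where "le = lamext n L k lam"
  define WP where "WP = wall_positions n L k lam"
  define Wv where "Wv = W n L k lam"
  have ms: "hat n (m l) = le (Suc l) - le l" if "l \<le> L" for l
    using mu_spec[OF n p lL that] by (simp add: m_def le_def)
  have mlt: "m l < N" if "l \<le> L" for l
    using mu_spec[OF n p lL that] by (simp add: m_def N_def)
  have WPsub: "WP \<subseteq> {1..L}" by (auto simp: WP_def wall_positions_def domain_wall_def)
  have finWP: "finite WP" using WPsub finite_subset by blast
  have Wbig: "l \<notin> WP" if "Wv < l" for l
  proof
    assume "l \<in> WP"
    then have "WP \<noteq> {}" "l \<le> Max WP" using finWP by auto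
    then show False using that by (simp add: Wv_def W_def WP_def)
  qed
  have notwall: "N dvd m (Suc l) - m l - 1" if "Wv \<le> l" "l < L" for l
  proof (rule ccontr)
    assume c: "\<not> N dvd m (Suc l) - m l - 1"
    define d where "d = (m (Suc l) - m l - 1) mod N"
    have d0: "d \<noteq> 0" using c by (simp add: d_def dvd_eq_mod_eq_0)
    have dr: "0 \<le> d" "d < N" using n by (auto simp: d_def N_def)
    have "N dvd (m (Suc l) - m l - 1) - d" by (simp add: d_def mod_eq_dvd_iff[symmetric])
    then have "[m (Suc l) - m l = int (nat d) + 1] (mod N)"
      using dr by (simp add: cong_iff_dvd_diff algebra_simps)
    moreover have "1 \<le> nat d" "nat d \<le> n - 1" using d0 dr by (auto simp: N_def)
    ultimately have "domain_wall n L k lam (Suc l) (nat d)"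
      using that by (simp add: domain_wall_def m_def N_def)
    then have "Suc l \<in> WP" by (auto simp: WP_def wall_positions_def)
    with Wbig that show False by simp
  qed
  have P: "N dvd m l - (int l - int k)" if "Wv \<le> l" "l \<le> L" for l
    using that(2,1)
  proof (induction l rule: inc_induct)
    case base
    have "hat n (m L) = le (Suc L) - le L" using ms by simp
    also have "\<dots> = hat n (int L - int k)" using lL by (simp add: le_def lamext_def hat_def algebra_simps)
    finally show ?case using hat_inj[OF n] by (simp add: N_def)
  next
    case (step l)
    have a: "N dvd m (Suc l) - m l - 1" using notwall step by simp
    have "N dvd (m (Suc l) - (int (Suc l) - int k)) - (m (Suc l) - m l - 1)"
    proof -
      have ih: "N dvd m (Suc l) - (int (Suc l) - int k)" using step by simp
      show ?thesis using dvd_diff[OF ih a] by simp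
    qed
    moreover have "m (Suc l) - (int (Suc l) - int k) - (m (Suc l) - m l - 1) = m l - (int l - int k)"
      by simp
    ultimately show ?case by metis
  qed
  have Q: "le l = Lam n (int k) + Lam n (int l - int k)" if "Wv \<le> l" "l \<le> Suc L" for l
    using that(2,1)
  proof (induction l rule: inc_induct)
    case base
    show ?case by (simp add: le_def lamext_def algebra_simps)
  next
    case (step l)
    have lL: "l \<le> L" using step by simp
    have "hat n (m l) = hat n (int l - int k)" using P[OF step.prems lL] by (intro hat_cong) (simp add: N_def)
    moreover have "le l = le (Suc l) - (le (Suc l) - le l)" by simp
    ultimately have "le l = le (Suc l) - hat n (int l - int k)" using ms[OF lL] by simp
    also have "\<dots> = Lam n (int k) + Lam n (int l - int k)"
    proof -
      have e: "int (Suc l) - int k = int l - int k + 1" by simp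
      have "le (Suc l) = Lam n (int k) + Lam n (int (Suc l) - int k)" using step.IH[OF le_SucI[OF step.prems]] .
      then have "le (Suc l) = Lam n (int k) + Lam n (int l - int k + 1)" by (simp only: e)
      then show ?thesis by (simp only: hat_def grp1)
    qed
    finally show ?case .
  qed
  show ?thesis
  proof (cases "WP = {}")
    case True
    then have W0: "Wv = 0" "hN n L k lam = n" by (simp_all add: Wv_def W_def hN_def WP_def)
    have "le 0 = Lam n (int k) + Lam n (- int k)" using Q[of 0] W0 by simp
    then have "Lam n 0 + Lam n 0 = Lam n (int k) + Lam n (- int k)" using assms(4) by (simp add: le_def lamext_def)
    then have "(Lam n 0 + Lam n 0) 0 = (Lam n (int k) + Lam n (- int k)) 0" by simp
    then have "int k mod int n = 0" by (simp add: Lam_def split: if_splits)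
    then have "k = 0" using assms(2) by simp
    then show ?thesis using W0 by (simp add: Wv_def cong_iff_dvd_diff)
  next
    case False
    then have WvWP: "Wv \<in> WP" using finWP by (simp add: Wv_def W_def WP_def)
    then obtain h where dw: "domain_wall n L k lam Wv h" by (auto simp: WP_def wall_positions_def)
    have hN: "hN n L k lam = h"
    proof -
      have uq: "h' = h" if "domain_wall n L k lam Wv h'" for h'
      proof -
        have "[int h' + 1 = int h + 1] (mod int n)" using that dw
          by (meson cong_sym cong_trans domain_wall_def)
        then have "int h' mod int n = int h mod int n" by (simp add: cong_iff_dvd_diff mod_eq_dvd_iff)
        moreover have "h < n" "h' < n" using that dw n by (auto simp: domain_wall_def)
        ultimately show ?thesis by simp
      qed
      have "hN n L k lam = (THE h. domain_wall n L k lam Wv h)" using False by (simp add: hN_def Wv_def WP_def)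
      also have "\<dots> = h" by (rule the_equality) (rule dw, rule uq)
      finally show ?thesis .
    qed
    have W1: "1 \<le> Wv" "Wv \<le> L" "1 \<le> h" "h < n" using dw n by (auto simp: domain_wall_def)
    have c1: "N dvd m Wv - m (Wv - 1) - (int h + 1)" using dw
      by (simp add: domain_wall_def cong_iff_dvd_diff m_def N_def)
    have c2: "N dvd m Wv - (int Wv - int k)" using P W1 by simp
    have lw: "le (Wv - 1) = le Wv - hat n (m (Wv - 1))" using ms[of "Wv - 1"] W1 by simp
    have c3: "N dvd m (Wv - 1) + 1 - int k"
    proof (rule ccontr)
      assume c: "\<not> ?thesis"
      define mm where "mm = m (Wv - 1)"
      define a where "a = nat ((mm + 1) mod N)"
      have ia: "int a = (mm + 1) mod N" using n by (simp add: a_def N_def)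
      have v1: "Lam n (int k) a = 0" using ia c
        by (simp add: Lam_def N_def mm_def mod_eq_dvd_iff)
      have v2: "Lam n (int Wv - int k) a = 0"
      proof -
        have "\<not> N dvd (mm + 1) - (int Wv - int k)"
        proof
          assume d: "N dvd (mm + 1) - (int Wv - int k)"
          have "N dvd (m Wv - mm - (int h + 1)) - (m Wv - (int Wv - int k)) + ((mm + 1) - (int Wv - int k))"
            using dvd_add[OF dvd_diff[OF c1 c2] d] by (simp add: mm_def)
          moreover have "(m Wv - mm - (int h + 1)) - (m Wv - (int Wv - int k)) + ((mm + 1) - (int Wv - int k)) = - int h"
            by simp
          ultimately have "N dvd - int h" by metis
          then have "N dvd int h" by simp
          then have "n dvd h" by (simp add: N_def)
          then have "n \<le> h" using W1 by (simp add: dvd_imp_le)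
          then show False using W1 by simp
        qed
        then show ?thesis using ia by (simp add: Lam_def N_def mod_eq_dvd_iff)
      qed
      have v3: "Lam n (mm + 1) a = 1" using ia by (simp add: Lam_def N_def)
      have v4: "Lam n mm a = 0" using ia mod_succ_ne[OF n, of mm] by (simp add: Lam_def N_def)
      have "le (Wv - 1) a = -1"
        using lw Q[of Wv] W1 v1 v2 v3 v4 by (simp add: hat_def mm_def)
      moreover have "le (Wv - 1) \<in> P2plus n" proof -
        have "Wv - 1 \<le> L" using W1 by simp
        then show ?thesis using p unfolding le_def lamext_def is_path_def by simp
      qed
      ultimately show False using P2_nonneg[of "le (Wv - 1)" n a] by simp
    qed
    have "N dvd (m Wv - m (Wv - 1) - (int h + 1)) - (m Wv - (int Wv - int k)) + (m (Wv - 1) + 1 - int k)"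
      using dvd_add[OF dvd_diff[OF c1 c2] c3] by simp
    moreover have "(m Wv - m (Wv - 1) - (int h + 1)) - (m Wv - (int Wv - int k)) + (m (Wv - 1) + 1 - int k) = int Wv - int h - 2 * int k"
      by simp
    ultimately have "N dvd int Wv - int h - 2 * int k" by metis
    then show ?thesis using hN by (simp add: cong_iff_dvd_diff Wv_def N_def)
  qed
qed

end
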